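(* Let $p$ be an odd prime, and let $q$ denote the smallest prime greater than $p/2$. Write $p=p_n$, where $p_k$ denotes the $k$-th prime, and let $p_{n+1}$ be the next prime after $p$. Then the following two conditions are equivalent: (1) all the integers $\frac{p+1}{2},\frac{p+3}{2},\dots,\frac{p_{n+1}-1}{2}$ are composite; (2) the open interval $(p,\,2q)$ contains a prime.
   Context: $p_k$ denotes the $k$-th prime ($p_1=2$, $p_2=3,\dots$). Since $p/2$ is not an integer, the smallest prime $q$ greater than $p/2$ is the prime $p_{m+1}$ with $p_m<p/2<p_{m+1}$. *)

theory Defs
  imports Complex_Main "HOL-Computational_Algebra.Primes"
begin

definition next_prime :: "nat \<Rightarrow> nat" where
  "next_prime p = (LEAST r. prime r \<and> p < r)"

definition least_prime_above_half :: "nat \<Rightarrow> nat" where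
  "least_prime_above_half p = (LEAST q. prime q \<and> real p / 2 < real q)"

definition composite :: "nat \<Rightarrow> bool" where
  "composite m \<longleftrightarrow> 1 < m \<and> \<not> prime m"

end

theory Submission
  imports Defs
begin

theorem lemma1:
  fixes p :: nat
  assumes "prime p" and "odd p"
  shows "(\<forall>m::nat. p + 1 \<le> 2 * m \<and> 2 * m \<le> next_prime p - 1 \<longrightarrow> composite m)
     \<longleftrightarrow> (\<exists>r::nat. prime r \<and> p < r \<and> r < 2 * least_prime_above_half p)"
proof -
  define P where "P = next_prime p"
  define q where "q = least_prime_above_half p"
  obtain r0 where r0: "prime r0" "p < r0" using bigger_prime by blast
  have P1: "prime P \<and> p < P" unfolding P_def next_prime_def
    by (rule LeastI[of _ r0]) (use r0 in auto)
  have P2: "P \<le> r" if "prime r" "p < r" for r unfolding P_def next_prime_def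
    by (rule Least_le) (use that in blast)
  have "real p > 0" using assms prime_gt_0_nat by simp
  hence "prime p \<and> real p / 2 < real p" using assms by simp
  hence q1: "prime q \<and> real p / 2 < real q" unfolding q_def least_prime_above_half_def
    by (rule LeastI)
  have q2: "q \<le> r" if "prime r" "p < 2 * r" for r
  proof -
    have "real p < 2 * real r" using that(2) by linarith
    hence "real p / 2 < real r" by linarith
    thus ?thesis unfolding q_def least_prime_above_half_def
      by (intro Least_le) (use that in blast)
  qed
  have "real p < 2 * real q" using q1 by linarith
  hence q3: "p < 2 * q" by linarith
  have p2: "p \<ge> 3" using assms prime_ge_2_nat[of p] by (cases "p = 2") auto
  have ne: "P \<noteq> 2 * q"
  proof
    assume "P = 2 * q"
    hence "even P" by simp
    moreover have "odd P" using P1 p2 by (intro prime_odd_nat) auto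
    ultimately show False by simp
  qed
  show ?thesis unfolding P_def[symmetric] q_def[symmetric]
  proof
    assume H: "\<forall>m. p + 1 \<le> 2 * m \<and> 2 * m \<le> P - 1 \<longrightarrow> composite m"
    have "\<not> 2 * q \<le> P - 1"
    proof
      assume "2 * q \<le> P - 1"
      with H q3 have "composite q" by auto
      with q1 show False unfolding composite_def by auto
    qed
    hence "P < 2 * q" using ne by auto
    thus "\<exists>r. prime r \<and> p < r \<and> r < 2 * q" using P1 by blast
  next
    assume "\<exists>r. prime r \<and> p < r \<and> r < 2 * q"
    then obtain r where r: "prime r" "p < r" "r < 2 * q" by blast
    have PL: "P < 2 * q" using P2[OF r(1,2)] r(3) by linarith
    show "\<forall>m. p + 1 \<le> 2 * m \<and> 2 * m \<le> P - 1 \<longrightarrow> composite m"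
    proof (intro allI impI)
      fix m assume m: "p + 1 \<le> 2 * m \<and> 2 * m \<le> P - 1"
      show "composite m"
      proof (rule ccontr)
        assume "\<not> composite m"
        moreover have "1 < m" using m p2 by linarith
        ultimately have "prime m" unfolding composite_def by auto
        hence "q \<le> m" using q2 m by auto
        thus False using m PL by linarith
      qed
    qed
  qed
qed

end
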